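(* Let $\mathcal T$ and $\mathcal S$ be triangulated categories and let $T:\mathcal S\to\mathcal T$ be a triangle functor. Suppose $T$ has a left (respectively right) adjoint $S$. Then an object $Q$ of $\mathcal S$ is $T$-relative projective (respectively $T$-relative injective) if and only if $Q$ lies in $\mathrm{add}(\mathrm{im}(S))$.
   Context: An object $Q$ of $\mathcal S$ is $T$-relative projective if the natural transformation $\mathcal S(Q,-)\to\mathcal T(TQ,T-)$ induced by $T$ is injective, and $T$-relative injective if the natural transformation $\mathcal S(-,Q)\to\mathcal T(T-,TQ)$ induced by $T$ is injective. $\mathrm{add}(\mathrm{im}(S))$ is the full subcategory of direct summands of finite direct sums of objects $S(L)$, $L$ in $\mathcal T$. *)

theory Defs
  imports Main
begin

text \<open>Triangles are triples (u,v,w) with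
u : X -> Y, v : Y -> Z, w : Z -> Sigma X.\<close>

record ('o,'m) tricat =
  Obj :: "'o set"
  Arr :: "'m set"
  Dom :: "'m \<Rightarrow> 'o"
  Cod :: "'m \<Rightarrow> 'o"
  Cmp :: "'m \<Rightarrow> 'm \<Rightarrow> 'm"   (* Cmp g f = g o f *)
  Idn :: "'o \<Rightarrow> 'm"
  Zro :: "'o \<Rightarrow> 'o \<Rightarrow> 'm"
  Pls :: "'m \<Rightarrow> 'm \<Rightarrow> 'm"
  Ngt :: "'m \<Rightarrow> 'm"
  ShO :: "'o \<Rightarrow> 'o"
  ShA :: "'m \<Rightarrow> 'm"
  Dist :: "('m \<times> 'm \<times> 'm) set"

definition hom :: "('o,'m) tricat \<Rightarrow> 'o \<Rightarrow> 'o \<Rightarrow> 'm set" where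
  "hom C X Y = {f \<in> Arr C. Dom C f = X \<and> Cod C f = Y}"

definition category :: "('o,'m) tricat \<Rightarrow> bool" where
  "category C \<longleftrightarrow>
     (\<forall>f\<in>Arr C. Dom C f \<in> Obj C \<and> Cod C f \<in> Obj C) \<and>
     (\<forall>X\<in>Obj C. Idn C X \<in> hom C X X) \<and>
     (\<forall>X Y Z f g. f \<in> hom C X Y \<longrightarrow> g \<in> hom C Y Z \<longrightarrow> Cmp C g f \<in> hom C X Z) \<and>
     (\<forall>X Y Z W f g h. f \<in> hom C X Y \<longrightarrow> g \<in> hom C Y Z \<longrightarrow> h \<in> hom C Z W \<longrightarrow>
         Cmp C h (Cmp C g f) = Cmp C (Cmp C h g) f) \<and>
     (\<forall>X Y f. f \<in> hom C X Y \<longrightarrow> Cmp C f (Idn C X) = f \<and> Cmp C (Idn C Y) f = f)"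

definition preadditive :: "('o,'m) tricat \<Rightarrow> bool" where
  "preadditive C \<longleftrightarrow> category C \<and>
     (\<forall>X\<in>Obj C. \<forall>Y\<in>Obj C.
        Zro C X Y \<in> hom C X Y \<and>
        (\<forall>f\<in>hom C X Y. \<forall>g\<in>hom C X Y. Pls C f g \<in> hom C X Y) \<and>
        (\<forall>f\<in>hom C X Y. Ngt C f \<in> hom C X Y) \<and>
        (\<forall>f\<in>hom C X Y. \<forall>g\<in>hom C X Y. \<forall>h\<in>hom C X Y.
            Pls C (Pls C f g) h = Pls C f (Pls C g h)) \<and>
        (\<forall>f\<in>hom C X Y. \<forall>g\<in>hom C X Y. Pls C f g = Pls C g f) \<and>
        (\<forall>f\<in>hom C X Y. Pls C f (Zro C X Y) = f) \<and>
        (\<forall>f\<in>hom C X Y. Pls C f (Ngt C f) = Zro C X Y)) \<and>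
     (\<forall>X Y Z f g g'. f \<in> hom C X Y \<longrightarrow> g \<in> hom C Y Z \<longrightarrow> g' \<in> hom C Y Z \<longrightarrow>
         Cmp C (Pls C g g') f = Pls C (Cmp C g f) (Cmp C g' f)) \<and>
     (\<forall>X Y Z f f' g. f \<in> hom C X Y \<longrightarrow> f' \<in> hom C X Y \<longrightarrow> g \<in> hom C Y Z \<longrightarrow>
         Cmp C g (Pls C f f') = Pls C (Cmp C g f) (Cmp C g f'))"

definition zero_obj :: "('o,'m) tricat \<Rightarrow> 'o \<Rightarrow> bool" where
  "zero_obj C Z \<longleftrightarrow> Z \<in> Obj C \<and>
     (\<forall>X\<in>Obj C. hom C Z X = {Zro C Z X} \<and> hom C X Z = {Zro C X Z})"

definition is_biprod ::
  "('o,'m) tricat \<Rightarrow> 'o list \<Rightarrow> 'o \<Rightarrow> 'm list \<Rightarrow> 'm list \<Rightarrow> bool" where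
  "is_biprod C Xs P ins prs \<longleftrightarrow> P \<in> Obj C \<and>
     length ins = length Xs \<and> length prs = length Xs \<and>
     (\<forall>i<length Xs. ins ! i \<in> hom C (Xs ! i) P \<and> prs ! i \<in> hom C P (Xs ! i)) \<and>
     (\<forall>i<length Xs. \<forall>j<length Xs.
        Cmp C (prs ! i) (ins ! j) = (if i = j then Idn C (Xs ! i) else Zro C (Xs ! j) (Xs ! i))) \<and>
     foldr (\<lambda>i acc. Pls C (Cmp C (ins ! i) (prs ! i)) acc) [0..<length Xs] (Zro C P P)
       = Idn C P"

definition additive :: "('o,'m) tricat \<Rightarrow> bool" where
  "additive C \<longleftrightarrow> preadditive C \<and> (\<exists>Z. zero_obj C Z) \<and>
     (\<forall>X\<in>Obj C. \<forall>Y\<in>Obj C. \<exists>P ins prs. is_biprod C [X, Y] P ins prs)"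

definition iso :: "('o,'m) tricat \<Rightarrow> 'm \<Rightarrow> bool" where
  "iso C f \<longleftrightarrow> f \<in> Arr C \<and>
     (\<exists>g\<in>hom C (Cod C f) (Dom C f).
        Cmp C g f = Idn C (Dom C f) \<and> Cmp C f g = Idn C (Cod C f))"

definition "functor" ::
  "('o,'m) tricat \<Rightarrow> ('p,'n) tricat \<Rightarrow> ('o \<Rightarrow> 'p) \<Rightarrow> ('m \<Rightarrow> 'n) \<Rightarrow> bool" where
  "functor C D FO FM \<longleftrightarrow>
     (\<forall>X\<in>Obj C. FO X \<in> Obj D) \<and>
     (\<forall>X Y f. f \<in> hom C X Y \<longrightarrow> FM f \<in> hom D (FO X) (FO Y)) \<and>
     (\<forall>X\<in>Obj C. FM (Idn C X) = Idn D (FO X)) \<and>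
     (\<forall>X Y Z f g. f \<in> hom C X Y \<longrightarrow> g \<in> hom C Y Z \<longrightarrow>
        FM (Cmp C g f) = Cmp D (FM g) (FM f))"

definition additive_functor ::
  "('o,'m) tricat \<Rightarrow> ('p,'n) tricat \<Rightarrow> ('o \<Rightarrow> 'p) \<Rightarrow> ('m \<Rightarrow> 'n) \<Rightarrow> bool" where
  "additive_functor C D FO FM \<longleftrightarrow> functor C D FO FM \<and>
     (\<forall>X Y f g. f \<in> hom C X Y \<longrightarrow> g \<in> hom C X Y \<longrightarrow> FM (Pls C f g) = Pls D (FM f) (FM g))"

definition is_triangle :: "('o,'m) tricat \<Rightarrow> 'm \<times> 'm \<times> 'm \<Rightarrow> bool" where
  "is_triangle C t \<longleftrightarrow> (case t of (u, v, w) \<Rightarrow>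
     u \<in> Arr C \<and> v \<in> hom C (Cod C u) (Cod C v) \<and> Cod C v \<in> Obj C \<and>
     w \<in> hom C (Cod C v) (ShO C (Dom C u)))"

definition triangulated :: "('o,'m) tricat \<Rightarrow> bool" where
  "triangulated C \<longleftrightarrow> additive C \<and>
     \<comment> \<open>the shift is an additive auto-equivalence\<close>
     additive_functor C C (ShO C) (ShA C) \<and>
     (\<forall>X\<in>Obj C. \<forall>Y\<in>Obj C. bij_betw (ShA C) (hom C X Y) (hom C (ShO C X) (ShO C Y))) \<and>
     (\<forall>Y\<in>Obj C. \<exists>X\<in>Obj C. \<exists>f\<in>hom C (ShO C X) Y. iso C f) \<and>
     \<comment> \<open>distinguished triangles are triangles\<close>
     (\<forall>t\<in>Dist C. is_triangle C t) \<and>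
     \<comment> \<open>TR1\<close>
     (\<forall>X\<in>Obj C. \<forall>Z. zero_obj C Z \<longrightarrow>
        (Idn C X, Zro C X Z, Zro C Z (ShO C X)) \<in> Dist C) \<and>
     (\<forall>u v w u' v' w' a b c.
        is_triangle C (u, v, w) \<longrightarrow> (u', v', w') \<in> Dist C \<longrightarrow>
        a \<in> hom C (Dom C u) (Dom C u') \<longrightarrow> b \<in> hom C (Cod C u) (Cod C u') \<longrightarrow>
        c \<in> hom C (Cod C v) (Cod C v') \<longrightarrow> iso C a \<longrightarrow> iso C b \<longrightarrow> iso C c \<longrightarrow>
        Cmp C b u = Cmp C u' a \<longrightarrow> Cmp C c v = Cmp C v' b \<longrightarrow>
        Cmp C (ShA C a) w = Cmp C w' c \<longrightarrow> (u, v, w) \<in> Dist C) \<and>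
     (\<forall>u\<in>Arr C. \<exists>v w. (u, v, w) \<in> Dist C) \<and>
     \<comment> \<open>TR2 (rotation)\<close>
     (\<forall>u v w. is_triangle C (u, v, w) \<longrightarrow>
        ((u, v, w) \<in> Dist C \<longleftrightarrow> (v, w, Ngt C (ShA C u)) \<in> Dist C)) \<and>
     \<comment> \<open>TR3 (morphisms of triangles)\<close>
     (\<forall>u v w u' v' w' f g.
        (u, v, w) \<in> Dist C \<longrightarrow> (u', v', w') \<in> Dist C \<longrightarrow>
        f \<in> hom C (Dom C u) (Dom C u') \<longrightarrow> g \<in> hom C (Cod C u) (Cod C u') \<longrightarrow>
        Cmp C g u = Cmp C u' f \<longrightarrow>
        (\<exists>h\<in>hom C (Cod C v) (Cod C v').
           Cmp C h v = Cmp C v' g \<and> Cmp C (ShA C f) w = Cmp C w' h)) \<and>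
     \<comment> \<open>TR4 (octahedral axiom)\<close>
     (\<forall>u v j k l i m n.
        (u, j, k) \<in> Dist C \<longrightarrow> (v, l, i) \<in> Dist C \<longrightarrow> (Cmp C v u, m, n) \<in> Dist C \<longrightarrow>
        Dom C v = Cod C u \<longrightarrow>
        (\<exists>f\<in>hom C (Cod C j) (Cod C m). \<exists>g\<in>hom C (Cod C m) (Cod C l).
           (f, g, Cmp C (ShA C j) i) \<in> Dist C \<and>
           Cmp C f j = Cmp C m v \<and> Cmp C n f = k \<and> Cmp C g m = l \<and>
           Cmp C i g = Cmp C (ShA C u) n))"

definition triangle_functor ::
  "('o,'m) tricat \<Rightarrow> ('p,'n) tricat \<Rightarrow> ('o \<Rightarrow> 'p) \<Rightarrow> ('m \<Rightarrow> 'n) \<Rightarrow> bool" where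
  "triangle_functor C D FO FM \<longleftrightarrow> additive_functor C D FO FM \<and>
     (\<exists>\<phi>. (\<forall>X\<in>Obj C. \<phi> X \<in> hom D (FO (ShO C X)) (ShO D (FO X)) \<and> iso D (\<phi> X)) \<and>
          (\<forall>f\<in>Arr C. Cmp D (\<phi> (Cod C f)) (FM (ShA C f)) = Cmp D (ShA D (FM f)) (\<phi> (Dom C f))) \<and>
          (\<forall>u v w. (u, v, w) \<in> Dist C \<longrightarrow>
              (FM u, FM v, Cmp D (\<phi> (Dom C u)) (FM w)) \<in> Dist D))"

text \<open>adjunction C D F G: F : C -> D is left adjoint to G : D -> C
(unit/counit formulation with the triangle identities).\<close>

definition adjunction ::
  "('o,'m) tricat \<Rightarrow> ('p,'n) tricat \<Rightarrow> ('o \<Rightarrow> 'p) \<Rightarrow> ('m \<Rightarrow> 'n)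
     \<Rightarrow> ('p \<Rightarrow> 'o) \<Rightarrow> ('n \<Rightarrow> 'm) \<Rightarrow> bool" where
  "adjunction C D FO FM GO GM \<longleftrightarrow> functor C D FO FM \<and> functor D C GO GM \<and>
     (\<exists>\<eta> \<epsilon>.
        (\<forall>X\<in>Obj C. \<eta> X \<in> hom C X (GO (FO X))) \<and>
        (\<forall>f\<in>Arr C. Cmp C (\<eta> (Cod C f)) f = Cmp C (GM (FM f)) (\<eta> (Dom C f))) \<and>
        (\<forall>Y\<in>Obj D. \<epsilon> Y \<in> hom D (FO (GO Y)) Y) \<and>
        (\<forall>g\<in>Arr D. Cmp D g (\<epsilon> (Dom D g)) = Cmp D (\<epsilon> (Cod D g)) (FM (GM g))) \<and>
        (\<forall>X\<in>Obj C. Cmp D (\<epsilon> (FO X)) (FM (\<eta> X)) = Idn D (FO X)) \<and>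
        (\<forall>Y\<in>Obj D. Cmp C (GM (\<epsilon> Y)) (\<eta> (GO Y)) = Idn C (GO Y)))"

definition rel_projective :: "('o,'m) tricat \<Rightarrow> ('m \<Rightarrow> 'n) \<Rightarrow> 'o \<Rightarrow> bool" where
  "rel_projective C TM Q \<longleftrightarrow> (\<forall>X\<in>Obj C. inj_on TM (hom C Q X))"

definition rel_injective :: "('o,'m) tricat \<Rightarrow> ('m \<Rightarrow> 'n) \<Rightarrow> 'o \<Rightarrow> bool" where
  "rel_injective C TM Q \<longleftrightarrow> (\<forall>X\<in>Obj C. inj_on TM (hom C X Q))"

definition in_add_im :: "('o,'m) tricat \<Rightarrow> ('p,'n) tricat \<Rightarrow> ('p \<Rightarrow> 'o) \<Rightarrow> 'o \<Rightarrow> bool" where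
  "in_add_im C D SO Q \<longleftrightarrow>
     (\<exists>Ls P ins prs s r. set Ls \<subseteq> Obj D \<and> is_biprod C (map SO Ls) P ins prs \<and>
        s \<in> hom C Q P \<and> r \<in> hom C P Q \<and> Cmp C r s = Idn C Q)"

end

theory Submission
  imports Defs
begin


lemma homI: "f \<in> Arr C \<Longrightarrow> Dom C f = X \<Longrightarrow> Cod C f = Y \<Longrightarrow> f \<in> hom C X Y"
  by (simp add: hom_def)
lemma homD: "f \<in> hom C X Y \<Longrightarrow> f \<in> Arr C \<and> Dom C f = X \<and> Cod C f = Y"
  by (simp add: hom_def)
lemma arr_hom: "f \<in> Arr C \<Longrightarrow> f \<in> hom C (Dom C f) (Cod C f)"
  by (simp add: hom_def)

context fixes C :: "('o,'m) tricat" assumes cat: "category C"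
begin
lemma hom_objs: "f \<in> hom C X Y \<Longrightarrow> X \<in> Obj C \<and> Y \<in> Obj C"
  using cat unfolding category_def hom_def by auto
lemma comp_hom: "f \<in> hom C X Y \<Longrightarrow> g \<in> hom C Y Z \<Longrightarrow> Cmp C g f \<in> hom C X Z"
  using cat[unfolded category_def, THEN conjunct2, THEN conjunct2, THEN conjunct1] by blast
lemma assoc: "f \<in> hom C X Y \<Longrightarrow> g \<in> hom C Y Z \<Longrightarrow> h \<in> hom C Z W \<Longrightarrow>
         Cmp C h (Cmp C g f) = Cmp C (Cmp C h g) f"
  using cat[unfolded category_def, THEN conjunct2, THEN conjunct2, THEN conjunct2, THEN conjunct1] by blast
lemma idr: "f \<in> hom C X Y \<Longrightarrow> Cmp C f (Idn C X) = f"
  using cat unfolding category_def by blast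
lemma idl: "f \<in> hom C X Y \<Longrightarrow> Cmp C (Idn C Y) f = f"
  using cat unfolding category_def by blast
lemma id_hom: "X \<in> Obj C \<Longrightarrow> Idn C X \<in> hom C X X"
  using cat unfolding category_def by blast
lemma iso_id: "X \<in> Obj C \<Longrightarrow> iso C (Idn C X)"
  unfolding iso_def using id_hom[of X] homD[of "Idn C X" C X X] idl[of "Idn C X" X X]
  by auto
lemma iso_inv: "iso C f \<Longrightarrow> f \<in> hom C X Y \<Longrightarrow> \<exists>g\<in>hom C Y X. Cmp C g f = Idn C X \<and> Cmp C f g = Idn C Y"
  unfolding iso_def hom_def by auto
end

context fixes C :: "('o,'m) tricat" assumes pa: "preadditive C"
begin
lemma pcat: "category C" using pa unfolding preadditive_def by simp
lemma pa_XY: assumes "X \<in> Obj C" "Y \<in> Obj C" shows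
        "Zro C X Y \<in> hom C X Y \<and>
        (\<forall>f\<in>hom C X Y. \<forall>g\<in>hom C X Y. Pls C f g \<in> hom C X Y) \<and>
        (\<forall>f\<in>hom C X Y. Ngt C f \<in> hom C X Y) \<and>
        (\<forall>f\<in>hom C X Y. \<forall>g\<in>hom C X Y. \<forall>h\<in>hom C X Y.
            Pls C (Pls C f g) h = Pls C f (Pls C g h)) \<and>
        (\<forall>f\<in>hom C X Y. \<forall>g\<in>hom C X Y. Pls C f g = Pls C g f) \<and>
        (\<forall>f\<in>hom C X Y. Pls C f (Zro C X Y) = f) \<and>
        (\<forall>f\<in>hom C X Y. Pls C f (Ngt C f) = Zro C X Y)"
  using bspec[OF bspec[OF conjunct1[OF conjunct2[OF pa[unfolded preadditive_def]]] assms(1)] assms(2)] .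
lemma hXY: "f \<in> hom C X Y \<Longrightarrow> X \<in> Obj C \<and> Y \<in> Obj C" using hom_objs[OF pcat] .
lemma pa_f: assumes "f \<in> hom C X Y" shows
        "Zro C X Y \<in> hom C X Y \<and>
        (\<forall>f\<in>hom C X Y. \<forall>g\<in>hom C X Y. Pls C f g \<in> hom C X Y) \<and>
        (\<forall>f\<in>hom C X Y. Ngt C f \<in> hom C X Y) \<and>
        (\<forall>f\<in>hom C X Y. \<forall>g\<in>hom C X Y. \<forall>h\<in>hom C X Y.
            Pls C (Pls C f g) h = Pls C f (Pls C g h)) \<and>
        (\<forall>f\<in>hom C X Y. \<forall>g\<in>hom C X Y. Pls C f g = Pls C g f) \<and>
        (\<forall>f\<in>hom C X Y. Pls C f (Zro C X Y) = f) \<and>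
        (\<forall>f\<in>hom C X Y. Pls C f (Ngt C f) = Zro C X Y)"
  using hXY[OF assms] by (intro pa_XY) auto
lemma zro_hom: "X \<in> Obj C \<Longrightarrow> Y \<in> Obj C \<Longrightarrow> Zro C X Y \<in> hom C X Y"
  using pa_XY by simp
lemma pls_hom: "f \<in> hom C X Y \<Longrightarrow> g \<in> hom C X Y \<Longrightarrow> Pls C f g \<in> hom C X Y"
  using pa_f[of f X Y, THEN conjunct2, THEN conjunct1] by blast
lemma ngt_hom: "f \<in> hom C X Y \<Longrightarrow> Ngt C f \<in> hom C X Y"
  using pa_f[of f X Y, THEN conjunct2, THEN conjunct2, THEN conjunct1] by blast
lemma pls_assoc: "f \<in> hom C X Y \<Longrightarrow> g \<in> hom C X Y \<Longrightarrow> h \<in> hom C X Y \<Longrightarrow>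
            Pls C (Pls C f g) h = Pls C f (Pls C g h)"
  using pa_f[of f X Y, THEN conjunct2, THEN conjunct2, THEN conjunct2, THEN conjunct1] by blast
lemma pls_comm: "f \<in> hom C X Y \<Longrightarrow> g \<in> hom C X Y \<Longrightarrow> Pls C f g = Pls C g f"
  using pa_f[of f X Y, THEN conjunct2, THEN conjunct2, THEN conjunct2, THEN conjunct2, THEN conjunct1] by blast
lemma pls_zro: "f \<in> hom C X Y \<Longrightarrow> Pls C f (Zro C X Y) = f"
  using pa_f[of f X Y, THEN conjunct2, THEN conjunct2, THEN conjunct2, THEN conjunct2, THEN conjunct2, THEN conjunct1] by blast
lemma pls_ngt: "f \<in> hom C X Y \<Longrightarrow> Pls C f (Ngt C f) = Zro C X Y"
  using pa_f[of f X Y, THEN conjunct2, THEN conjunct2, THEN conjunct2, THEN conjunct2, THEN conjunct2, THEN conjunct2] by blast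
lemma distr_l: "f \<in> hom C X Y \<Longrightarrow> g \<in> hom C Y Z \<Longrightarrow> g' \<in> hom C Y Z \<Longrightarrow>
         Cmp C (Pls C g g') f = Pls C (Cmp C g f) (Cmp C g' f)"
  using pa[unfolded preadditive_def, THEN conjunct2, THEN conjunct2, THEN conjunct1] by blast
lemma distr_r: "f \<in> hom C X Y \<Longrightarrow> f' \<in> hom C X Y \<Longrightarrow> g \<in> hom C Y Z \<Longrightarrow>
         Cmp C g (Pls C f f') = Pls C (Cmp C g f) (Cmp C g f')"
  using pa[unfolded preadditive_def, THEN conjunct2, THEN conjunct2, THEN conjunct2] by blast

lemma zro_pls: "f \<in> hom C X Y \<Longrightarrow> Pls C (Zro C X Y) f = f"
  proof - assume f: "f \<in> hom C X Y" have z: "Zro C X Y \<in> hom C X Y" using zro_hom hXY[OF f] by simp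
  show ?thesis using pls_comm[OF z f] pls_zro[OF f] by simp qed

lemma cancel: assumes a: "a \<in> hom C X Y" and e: "Pls C a a = a" shows "a = Zro C X Y"
proof -
  have "Zro C X Y = Pls C (Pls C a a) (Ngt C a)" using e pls_ngt[OF a] by simp
  also have "\<dots> = Pls C a (Pls C a (Ngt C a))" using pls_assoc a ngt_hom by blast
  also have "\<dots> = a" using pls_ngt[OF a] pls_zro[OF a] by simp
  finally show ?thesis by simp
qed

lemma neg_unique: assumes a: "a \<in> hom C X Y" and b: "b \<in> hom C X Y"
  and e: "Pls C a b = Zro C X Y" shows "b = Ngt C a"
proof -
  have na: "Ngt C a \<in> hom C X Y" using ngt_hom a .
  have "b = Pls C (Zro C X Y) b" using zro_pls b by simp
  also have "\<dots> = Pls C (Pls C (Ngt C a) a) b" using pls_ngt[OF a] pls_comm[OF a na] by simp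
  also have "\<dots> = Pls C (Ngt C a) (Pls C a b)" using pls_assoc na a b by blast
  also have "\<dots> = Ngt C a" using e pls_zro[OF na] by simp
  finally show ?thesis .
qed

lemma ngt_ngt: "a \<in> hom C X Y \<Longrightarrow> Ngt C (Ngt C a) = a"
  proof - assume a: "a \<in> hom C X Y" have n: "Ngt C a \<in> hom C X Y" using ngt_hom[OF a] .
  have "Pls C (Ngt C a) a = Zro C X Y" using pls_comm[OF n a] pls_ngt[OF a] by simp
  from neg_unique[OF n a this] show ?thesis by simp qed

lemma ngt_inj: "a \<in> hom C X Y \<Longrightarrow> b \<in> hom C X Y \<Longrightarrow> Ngt C a = Ngt C b \<Longrightarrow> a = b"
  by (metis ngt_ngt)

lemma ngt_zro: "X \<in> Obj C \<Longrightarrow> Y \<in> Obj C \<Longrightarrow> Ngt C (Zro C X Y) = Zro C X Y"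
  proof - assume X: "X \<in> Obj C" and Y: "Y \<in> Obj C" have z: "Zro C X Y \<in> hom C X Y" using zro_hom X Y by simp
  from neg_unique[OF z z pls_zro[OF z]] show ?thesis by simp qed

lemma comp_zro_r: assumes g: "g \<in> hom C Y Z" and X: "X \<in> Obj C"
  shows "Cmp C g (Zro C X Y) = Zro C X Z"
proof -
  have Y: "Y \<in> Obj C" and Z: "Z \<in> Obj C" using hom_objs[OF pcat g] by auto
  have z: "Zro C X Y \<in> hom C X Y" using zro_hom X Y by simp
  have "Cmp C g (Zro C X Y) = Cmp C g (Pls C (Zro C X Y) (Zro C X Y))" using pls_zro z by simp
  also have "\<dots> = Pls C (Cmp C g (Zro C X Y)) (Cmp C g (Zro C X Y))" using distr_r z g by blast
  finally show ?thesis using cancel[OF comp_hom[OF pcat z g]] by simp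
qed

lemma comp_zro_l: assumes f: "f \<in> hom C X Y" and Z: "Z \<in> Obj C"
  shows "Cmp C (Zro C Y Z) f = Zro C X Z"
proof -
  have Y: "Y \<in> Obj C" using hom_objs[OF pcat f] by auto
  have z: "Zro C Y Z \<in> hom C Y Z" using zro_hom Z Y by simp
  have "Cmp C (Zro C Y Z) f = Cmp C (Pls C (Zro C Y Z) (Zro C Y Z)) f" using pls_zro z by simp
  also have "\<dots> = Pls C (Cmp C (Zro C Y Z) f) (Cmp C (Zro C Y Z) f)" using distr_l z f by blast
  finally show ?thesis using cancel[OF comp_hom[OF pcat f z]] by simp
qed

lemma comp_ngt_r: assumes f: "f \<in> hom C X Y" and g: "g \<in> hom C Y Z"
  shows "Cmp C g (Ngt C f) = Ngt C (Cmp C g f)"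
proof -
  have X: "X \<in> Obj C" using hom_objs[OF pcat f] by auto
  have "Pls C (Cmp C g f) (Cmp C g (Ngt C f)) = Cmp C g (Pls C f (Ngt C f))"
    using distr_r[OF f ngt_hom[OF f] g] by simp
  also have "\<dots> = Zro C X Z" using pls_ngt f comp_zro_r g X by simp
  finally show ?thesis using neg_unique[OF comp_hom[OF pcat f g] comp_hom[OF pcat ngt_hom[OF f] g]] by simp
qed

lemma comp_ngt_l: assumes f: "f \<in> hom C X Y" and g: "g \<in> hom C Y Z"
  shows "Cmp C (Ngt C g) f = Ngt C (Cmp C g f)"
proof -
  have Z: "Z \<in> Obj C" using hom_objs[OF pcat g] by auto
  have "Pls C (Cmp C g f) (Cmp C (Ngt C g) f) = Cmp C (Pls C g (Ngt C g)) f"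
    using distr_l[OF f g ngt_hom[OF g]] by simp
  also have "\<dots> = Zro C X Z" using pls_ngt g comp_zro_l f Z by simp
  finally show ?thesis using neg_unique[OF comp_hom[OF pcat f g] comp_hom[OF pcat f ngt_hom[OF g]]] by simp
qed

lemma foldr_hom: assumes "\<forall>i\<in>set js. c i \<in> hom C X Y" "z \<in> hom C X Y"
  shows "foldr (\<lambda>i acc. Pls C (c i) acc) js z \<in> hom C X Y"
  using assms by (induction js) (auto intro: pls_hom)

lemma foldr_ext_r: assumes "\<forall>i\<in>set js. c i \<in> hom C X Y" "z \<in> hom C X Y"
  and a: "a \<in> hom C Y W" and b: "b \<in> hom C Y W"
  and ab: "\<forall>i\<in>set js. Cmp C a (c i) = Cmp C b (c i)" and abz: "Cmp C a z = Cmp C b z"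
  shows "Cmp C a (foldr (\<lambda>i acc. Pls C (c i) acc) js z) = Cmp C b (foldr (\<lambda>i acc. Pls C (c i) acc) js z)"
  using assms(1,2) ab
proof (induction js)
  case Nil then show ?case using abz by simp
next
  case (Cons i js)
  have h: "foldr (\<lambda>i acc. Pls C (c i) acc) js z \<in> hom C X Y" using foldr_hom[of js c X Y z] Cons.prems by simp
  have ci: "c i \<in> hom C X Y" using Cons.prems by simp
  show ?case using Cons distr_r[OF ci h a] distr_r[OF ci h b] by simp
qed

lemma foldr_ext_l: assumes "\<forall>i\<in>set js. c i \<in> hom C X Y" "z \<in> hom C X Y"
  and a: "a \<in> hom C W X" and b: "b \<in> hom C W X"
  and ab: "\<forall>i\<in>set js. Cmp C (c i) a = Cmp C (c i) b" and abz: "Cmp C z a = Cmp C z b"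
  shows "Cmp C (foldr (\<lambda>i acc. Pls C (c i) acc) js z) a = Cmp C (foldr (\<lambda>i acc. Pls C (c i) acc) js z) b"
  using assms(1,2) ab
proof (induction js)
  case Nil then show ?case using abz by simp
next
  case (Cons i js)
  have h: "foldr (\<lambda>i acc. Pls C (c i) acc) js z \<in> hom C X Y" using foldr_hom[of js c X Y z] Cons.prems by simp
  have ci: "c i \<in> hom C X Y" using Cons.prems by simp
  show ?case using Cons distr_l[OF a ci h] distr_l[OF b ci h] by simp
qed

lemma biprod_ext_r: assumes bp: "is_biprod C Xs P ins prs"
  and a: "a \<in> hom C P W" and b: "b \<in> hom C P W"
  and ab: "\<forall>i<length Xs. Cmp C a (ins ! i) = Cmp C b (ins ! i)"
  shows "a = b"
proof -
  let ?c = "\<lambda>i. Cmp C (ins ! i) (prs ! i)"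
  have P: "P \<in> Obj C" using bp unfolding is_biprod_def by simp
  have W: "W \<in> Obj C" using hom_objs[OF pcat a] by simp
  have ins: "\<forall>i<length Xs. ins ! i \<in> hom C (Xs ! i) P \<and> prs ! i \<in> hom C P (Xs ! i)"
    using bp unfolding is_biprod_def by simp
  have c: "\<forall>i\<in>set [0..<length Xs]. ?c i \<in> hom C P P" using ins comp_hom[OF pcat] by auto
  have z: "Zro C P P \<in> hom C P P" using zro_hom P by simp
  have abc: "\<forall>i\<in>set [0..<length Xs]. Cmp C a (?c i) = Cmp C b (?c i)"
    using ins ab assoc[OF pcat] a b by auto
  have "Cmp C a (Zro C P P) = Cmp C b (Zro C P P)" using comp_zro_r a b P by simp
  from foldr_ext_r[OF c z a b abc this]
  have "Cmp C a (Idn C P) = Cmp C b (Idn C P)" using bp unfolding is_biprod_def by simp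
  then show ?thesis using idr[OF pcat a] idr[OF pcat b] by simp
qed

lemma biprod_ext_l: assumes bp: "is_biprod C Xs P ins prs"
  and a: "a \<in> hom C W P" and b: "b \<in> hom C W P"
  and ab: "\<forall>i<length Xs. Cmp C (prs ! i) a = Cmp C (prs ! i) b"
  shows "a = b"
proof -
  let ?c = "\<lambda>i. Cmp C (ins ! i) (prs ! i)"
  have P: "P \<in> Obj C" using bp unfolding is_biprod_def by simp
  have W: "W \<in> Obj C" using hom_objs[OF pcat a] by simp
  have ins: "\<forall>i<length Xs. ins ! i \<in> hom C (Xs ! i) P \<and> prs ! i \<in> hom C P (Xs ! i)"
    using bp unfolding is_biprod_def by simp
  have c: "\<forall>i\<in>set [0..<length Xs]. ?c i \<in> hom C P P" using ins comp_hom[OF pcat] by auto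
  have z: "Zro C P P \<in> hom C P P" using zro_hom P by simp
  have abc: "\<forall>i\<in>set [0..<length Xs]. Cmp C (?c i) a = Cmp C (?c i) b"
  proof
    fix i assume "i \<in> set [0..<length Xs]"
    then have i: "i < length Xs" by simp
    then have h1: "ins ! i \<in> hom C (Xs ! i) P" and h2: "prs ! i \<in> hom C P (Xs ! i)" using ins by auto
    show "Cmp C (?c i) a = Cmp C (?c i) b"
      using assoc[OF pcat a h2 h1] assoc[OF pcat b h2 h1] ab i by simp
  qed
  have "Cmp C (Zro C P P) a = Cmp C (Zro C P P) b" using comp_zro_l a b P by simp
  from foldr_ext_l[OF c z a b abc this]
  have "Cmp C (Idn C P) a = Cmp C (Idn C P) b" using bp unfolding is_biprod_def by simp
  then show ?thesis using idl[OF pcat a] idl[OF pcat b] by simp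
qed

lemma single_biprod: "P \<in> Obj C \<Longrightarrow> is_biprod C [P] P [Idn C P] [Idn C P]"
  unfolding is_biprod_def using id_hom[OF pcat, of P] idl[OF pcat, of "Idn C P" P P] pls_zro[of "Idn C P" P P] by auto
end



context fixes C :: "('o,'m) tricat" and D :: "('p,'n) tricat" and FO FM
  assumes fu: "functor C D FO FM"
begin
lemma fun_obj: "X \<in> Obj C \<Longrightarrow> FO X \<in> Obj D"
  using fu unfolding functor_def by blast
lemma fun_hom: "f \<in> hom C X Y \<Longrightarrow> FM f \<in> hom D (FO X) (FO Y)"
  using fu[unfolded functor_def, THEN conjunct2, THEN conjunct1] by blast
lemma fun_id: "X \<in> Obj C \<Longrightarrow> FM (Idn C X) = Idn D (FO X)"
  using fu[unfolded functor_def, THEN conjunct2, THEN conjunct2, THEN conjunct1] by blast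
lemma fun_comp: "f \<in> hom C X Y \<Longrightarrow> g \<in> hom C Y Z \<Longrightarrow> FM (Cmp C g f) = Cmp D (FM g) (FM f)"
  using fu[unfolded functor_def, THEN conjunct2, THEN conjunct2, THEN conjunct2] by blast
end

context fixes C :: "('o,'m) tricat" and D :: "('p,'n) tricat" and FO FM
  assumes af: "additive_functor C D FO FM" and pC: "preadditive C" and pD: "preadditive D"
begin
lemma af_fun: "functor C D FO FM" using af unfolding additive_functor_def by simp
lemma af_pls: "f \<in> hom C X Y \<Longrightarrow> g \<in> hom C X Y \<Longrightarrow> FM (Pls C f g) = Pls D (FM f) (FM g)"
  using af[unfolded additive_functor_def, THEN conjunct2] by blast
lemma af_zro: assumes X: "X \<in> Obj C" and Y: "Y \<in> Obj C"
  shows "FM (Zro C X Y) = Zro D (FO X) (FO Y)"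
proof -
  have z: "Zro C X Y \<in> hom C X Y" using zro_hom[OF pC X Y] .
  have "FM (Zro C X Y) = FM (Pls C (Zro C X Y) (Zro C X Y))" using pls_zro[OF pC z] by simp
  also have "\<dots> = Pls D (FM (Zro C X Y)) (FM (Zro C X Y))" using af_pls[OF z z] .
  finally show ?thesis using cancel[OF pD fun_hom[OF af_fun z]] by simp
qed
lemma af_ngt: assumes f: "f \<in> hom C X Y" shows "FM (Ngt C f) = Ngt D (FM f)"
proof -
  have X: "X \<in> Obj C" and Y: "Y \<in> Obj C" using hXY[OF pC f] by auto
  have n: "Ngt C f \<in> hom C X Y" using ngt_hom[OF pC f] .
  have "Pls D (FM f) (FM (Ngt C f)) = FM (Pls C f (Ngt C f))" using af_pls[OF f n] by simp
  also have "\<dots> = Zro D (FO X) (FO Y)" using pls_ngt[OF pC f] af_zro[OF X Y] by simp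
  finally show ?thesis using neg_unique[OF pD fun_hom[OF af_fun f] fun_hom[OF af_fun n]] by simp
qed
end

context fixes C :: "('o,'m) tricat" assumes tr: "triangulated C"
begin
lemma tr_pa: "preadditive C" using tr[unfolded triangulated_def, THEN conjunct1] unfolding additive_def by simp
lemma tr_cat: "category C" using pcat[OF tr_pa] .
lemma tr_zero: "\<exists>N. zero_obj C N" using tr[unfolded triangulated_def, THEN conjunct1] unfolding additive_def by simp
lemma tr_sh: "additive_functor C C (ShO C) (ShA C)" using tr[unfolded triangulated_def, THEN conjunct2, THEN conjunct1] .
lemma sh_fun: "functor C C (ShO C) (ShA C)" using af_fun[OF tr_sh tr_pa tr_pa] .
lemma sh_bij: "X \<in> Obj C \<Longrightarrow> Y \<in> Obj C \<Longrightarrow> bij_betw (ShA C) (hom C X Y) (hom C (ShO C X) (ShO C Y))"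
  by (rule tr[unfolded triangulated_def, THEN conjunct2, THEN conjunct2, THEN conjunct1, rule_format]; assumption)
lemma sh_inj: assumes "f \<in> hom C X Y" "g \<in> hom C X Y" "ShA C f = ShA C g" shows "f = g"
proof -
  have "X \<in> Obj C" "Y \<in> Obj C" using hXY[OF tr_pa assms(1)] by auto
  from sh_bij[OF this] have "inj_on (ShA C) (hom C X Y)" by (simp add: bij_betw_def)
  then show ?thesis using assms by (simp add: inj_on_def)
qed
lemma sh_surj: assumes "X \<in> Obj C" "Y \<in> Obj C" "g \<in> hom C (ShO C X) (ShO C Y)"
  shows "\<exists>f\<in>hom C X Y. g = ShA C f"
  using sh_bij[OF assms(1,2)] assms(3) unfolding bij_betw_def by auto
lemma ess_surj: "Y \<in> Obj C \<Longrightarrow> \<exists>X\<in>Obj C. \<exists>f\<in>hom C (ShO C X) Y. iso C f"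
  by (rule tr[unfolded triangulated_def, THEN conjunct2, THEN conjunct2, THEN conjunct2, THEN conjunct1, rule_format]; assumption)
lemma dist_is_tri: "(u, v, w) \<in> Dist C \<Longrightarrow> is_triangle C (u, v, w)"
  by (rule tr[unfolded triangulated_def, THEN conjunct2, THEN conjunct2, THEN conjunct2, THEN conjunct2, THEN conjunct1, rule_format]; assumption)
lemma dist_tri: assumes "(u, v, w) \<in> Dist C"
  shows "u \<in> hom C (Dom C u) (Cod C u) \<and> v \<in> hom C (Cod C u) (Cod C v) \<and> w \<in> hom C (Cod C v) (ShO C (Dom C u))"
  using dist_is_tri[OF assms] unfolding is_triangle_def by (auto simp: hom_def)
lemma tr1: "X \<in> Obj C \<Longrightarrow> zero_obj C N \<Longrightarrow> (Idn C X, Zro C X N, Zro C N (ShO C X)) \<in> Dist C"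
  by (rule tr[unfolded triangulated_def, THEN conjunct2, THEN conjunct2, THEN conjunct2, THEN conjunct2, THEN conjunct2, THEN conjunct1, rule_format]; assumption)
lemma tr1_iso: "is_triangle C (u, v, w) \<Longrightarrow> (u', v', w') \<in> Dist C \<Longrightarrow>
        a \<in> hom C (Dom C u) (Dom C u') \<Longrightarrow> b \<in> hom C (Cod C u) (Cod C u') \<Longrightarrow>
        c \<in> hom C (Cod C v) (Cod C v') \<Longrightarrow> iso C a \<Longrightarrow> iso C b \<Longrightarrow> iso C c \<Longrightarrow>
        Cmp C b u = Cmp C u' a \<Longrightarrow> Cmp C c v = Cmp C v' b \<Longrightarrow>
        Cmp C (ShA C a) w = Cmp C w' c \<Longrightarrow> (u, v, w) \<in> Dist C"
  by (rule tr[unfolded triangulated_def, THEN conjunct2, THEN conjunct2, THEN conjunct2, THEN conjunct2, THEN conjunct2, THEN conjunct2, THEN conjunct1, rule_format]; assumption)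
lemma tr1_ex: "u \<in> Arr C \<Longrightarrow> \<exists>v w. (u, v, w) \<in> Dist C"
  by (rule tr[unfolded triangulated_def, THEN conjunct2, THEN conjunct2, THEN conjunct2, THEN conjunct2, THEN conjunct2, THEN conjunct2, THEN conjunct2, THEN conjunct1, rule_format]; assumption)
lemma rot_iff: "is_triangle C (u, v, w) \<Longrightarrow> ((u, v, w) \<in> Dist C \<longleftrightarrow> (v, w, Ngt C (ShA C u)) \<in> Dist C)"
  by (rule tr[unfolded triangulated_def, THEN conjunct2, THEN conjunct2, THEN conjunct2, THEN conjunct2, THEN conjunct2, THEN conjunct2, THEN conjunct2, THEN conjunct2, THEN conjunct1, rule_format]; assumption)
lemma rot: assumes d: "(u, v, w) \<in> Dist C" shows "(v, w, Ngt C (ShA C u)) \<in> Dist C"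
  using rot_iff[OF dist_is_tri[OF d]] d by simp
lemma tr3: "(u, v, w) \<in> Dist C \<Longrightarrow> (u', v', w') \<in> Dist C \<Longrightarrow>
        f \<in> hom C (Dom C u) (Dom C u') \<Longrightarrow> g \<in> hom C (Cod C u) (Cod C u') \<Longrightarrow>
        Cmp C g u = Cmp C u' f \<Longrightarrow>
        (\<exists>h\<in>hom C (Cod C v) (Cod C v').
           Cmp C h v = Cmp C v' g \<and> Cmp C (ShA C f) w = Cmp C w' h)"
  by (rule tr[unfolded triangulated_def, THEN conjunct2, THEN conjunct2, THEN conjunct2, THEN conjunct2, THEN conjunct2, THEN conjunct2, THEN conjunct2, THEN conjunct2, THEN conjunct2, THEN conjunct1, rule_format]; assumption)
end



context fixes C :: "('o,'m) tricat" assumes tr: "triangulated C"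
begin

lemma zero_objD: "zero_obj C N \<Longrightarrow> N \<in> Obj C \<and> (\<forall>X\<in>Obj C. hom C N X = {Zro C N X} \<and> hom C X N = {Zro C X N})"
  unfolding zero_obj_def by simp

lemma dist_zero: assumes d: "(u, v, w) \<in> Dist C"
  shows "Cmp C v u = Zro C (Dom C u) (Cod C v)"
proof -
  have pa: "preadditive C" using tr_pa[OF tr] .
  note dt = dist_tri[OF tr d]
  let ?X = "Dom C u" and ?Y = "Cod C u" and ?Z = "Cod C v"
  have u: "u \<in> hom C ?X ?Y" and v: "v \<in> hom C ?Y ?Z" using dt by auto
  have X: "?X \<in> Obj C" and Y: "?Y \<in> Obj C" and Z: "?Z \<in> Obj C" using hXY[OF pa u] hXY[OF pa v] by auto
  obtain N where N: "zero_obj C N" using tr_zero[OF tr] by blast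
  have NO: "N \<in> Obj C" using zero_objD[OF N] by simp
  have d0: "(Idn C ?X, Zro C ?X N, Zro C N (ShO C ?X)) \<in> Dist C" using tr1[OF tr X N] .
  have i: "Idn C ?X \<in> hom C ?X ?X" using id_hom[OF tr_cat[OF tr] X] .
  have zXN: "Zro C ?X N \<in> hom C ?X N" using zro_hom[OF pa X NO] .
  have "\<exists>h\<in>hom C (Cod C (Zro C ?X N)) (Cod C v).
           Cmp C h (Zro C ?X N) = Cmp C v u \<and> Cmp C (ShA C (Idn C ?X)) (Zro C N (ShO C ?X)) = Cmp C w h"
    apply (rule tr3[OF tr d0 d])
    using i u homD[OF i] by auto
  then obtain h where h: "h \<in> hom C N ?Z" and e: "Cmp C h (Zro C ?X N) = Cmp C v u"
    using homD[OF zXN] by auto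
  show ?thesis using e comp_zro_r[OF pa h X] by simp
qed

lemma dist_exact: assumes d: "(u, v, w) \<in> Dist C" and h: "h \<in> hom C W (Cod C u)"
  and hv: "Cmp C v h = Zro C W (Cod C v)"
  shows "\<exists>s\<in>hom C W (Dom C u). Cmp C u s = h"
proof -
  have pa: "preadditive C" using tr_pa[OF tr] .
  note dt = dist_tri[OF tr d]
  let ?X = "Dom C u" and ?Y = "Cod C u" and ?Z = "Cod C v"
  have u: "u \<in> hom C ?X ?Y" and v: "v \<in> hom C ?Y ?Z" and w: "w \<in> hom C ?Z (ShO C ?X)" using dt by auto
  have X: "?X \<in> Obj C" and Y: "?Y \<in> Obj C" and Z: "?Z \<in> Obj C" using hXY[OF pa u] hXY[OF pa v] by auto
  have W: "W \<in> Obj C" using hXY[OF pa h] by simp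
  obtain N where N: "zero_obj C N" using tr_zero[OF tr] by blast
  have NO: "N \<in> Obj C" using zero_objD[OF N] by simp
  have sW: "ShO C W \<in> Obj C" using fun_obj[OF sh_fun[OF tr] W] .
  have sX: "ShO C ?X \<in> Obj C" using fun_obj[OF sh_fun[OF tr] X] .
  have d0: "(Zro C W N, Zro C N (ShO C W), Ngt C (ShA C (Idn C W))) \<in> Dist C"
    using rot[OF tr tr1[OF tr W N]] .
  have d1: "(v, w, Ngt C (ShA C u)) \<in> Dist C" using rot[OF tr d] .
  have zWN: "Zro C W N \<in> hom C W N" using zro_hom[OF pa W NO] .
  have zNs: "Zro C N (ShO C W) \<in> hom C N (ShO C W)" using zro_hom[OF pa NO sW] .
  have zNZ: "Zro C N ?Z \<in> hom C N ?Z" using zro_hom[OF pa NO Z] .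
  have eq: "Cmp C (Zro C N ?Z) (Zro C W N) = Cmp C v h"
    using hv comp_zro_r[OF pa zNZ W] by simp
  have "\<exists>k\<in>hom C (Cod C (Zro C N (ShO C W))) (Cod C w).
           Cmp C k (Zro C N (ShO C W)) = Cmp C w (Zro C N ?Z) \<and>
           Cmp C (ShA C h) (Ngt C (ShA C (Idn C W))) = Cmp C (Ngt C (ShA C u)) k"
    apply (rule tr3[OF tr d0 d1])
    using homD[OF zWN] homD[OF zNs] homD[OF h] homD[OF v] zNZ h eq by auto
  then obtain k where k: "k \<in> hom C (ShO C W) (ShO C ?X)"
     and e: "Cmp C (ShA C h) (Ngt C (ShA C (Idn C W))) = Cmp C (Ngt C (ShA C u)) k"
    using homD[OF zNs] homD[OF w] by auto
  have sh: "ShA C h \<in> hom C (ShO C W) (ShO C ?Y)" using fun_hom[OF sh_fun[OF tr] h] .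
  have su: "ShA C u \<in> hom C (ShO C ?X) (ShO C ?Y)" using fun_hom[OF sh_fun[OF tr] u] .
  have sid: "ShA C (Idn C W) = Idn C (ShO C W)" using fun_id[OF sh_fun[OF tr] W] .
  have idW: "Idn C (ShO C W) \<in> hom C (ShO C W) (ShO C W)" using id_hom[OF tr_cat[OF tr] sW] .
  have "Ngt C (ShA C h) = Ngt C (Cmp C (ShA C u) k)"
    using e sid comp_ngt_r[OF pa idW sh] idr[OF tr_cat[OF tr] sh] comp_ngt_l[OF pa k su] by simp
  then have "ShA C h = Cmp C (ShA C u) k"
    using ngt_inj[OF pa sh comp_hom[OF tr_cat[OF tr] k su]] by simp
  moreover obtain s where s: "s \<in> hom C W ?X" and ks: "k = ShA C s" using sh_surj[OF tr W X k] by blast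
  ultimately have "ShA C h = ShA C (Cmp C u s)"
    using fun_comp[OF sh_fun[OF tr] s u] by simp
  then have "h = Cmp C u s" using sh_inj[OF tr h comp_hom[OF tr_cat[OF tr] s u]] by simp
  then show ?thesis using s by blast
qed

end


lemma case1_key:
  assumes pS: "preadditive St" and fS: "functor Tt St SO SM" and fT: "functor St Tt TO TM"
  and e1: "\<forall>X\<in>Obj Tt. \<eta> X \<in> hom Tt X (TO (SO X))"
  and e3: "\<forall>Y\<in>Obj St. \<epsilon> Y \<in> hom St (SO (TO Y)) Y"
  and e4: "\<forall>g\<in>Arr St. Cmp St g (\<epsilon> (Dom St g)) = Cmp St (\<epsilon> (Cod St g)) (SM (TM g))"
  and e5: "\<forall>X\<in>Obj Tt. Cmp St (\<epsilon> (SO X)) (SM (\<eta> X)) = Idn St (SO X)"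
  and L: "L \<in> Obj Tt" and a: "a \<in> hom St (SO L) X" and b: "b \<in> hom St (SO L) X"
  and ab: "TM a = TM b"
  shows "a = b"
proof -
  have cS: "category St" using pcat[OF pS] .
  have SL: "SO L \<in> Obj St" using fun_obj[OF fS L] .
  have X: "X \<in> Obj St" using hXY[OF pS a] by simp
  have eSL: "\<epsilon> (SO L) \<in> hom St (SO (TO (SO L))) (SO L)" using e3 SL by simp
  have Se: "SM (\<eta> L) \<in> hom St (SO L) (SO (TO (SO L)))" using fun_hom[OF fS] e1 L by simp
  have id: "Cmp St (\<epsilon> (SO L)) (SM (\<eta> L)) = Idn St (SO L)" using e5 L by simp
  have gen: "c = Cmp St (Cmp St (\<epsilon> X) (SM (TM c))) (SM (\<eta> L))" if c: "c \<in> hom St (SO L) X" for c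
  proof -
    have "c = Cmp St c (Cmp St (\<epsilon> (SO L)) (SM (\<eta> L)))" using id idr[OF cS c] by simp
    also have "\<dots> = Cmp St (Cmp St c (\<epsilon> (SO L))) (SM (\<eta> L))" using assoc[OF cS Se eSL c] .
    also have "Cmp St c (\<epsilon> (SO L)) = Cmp St (\<epsilon> X) (SM (TM c))"
      using e4 homD[OF c] by auto
    finally show ?thesis .
  qed
  have "a = Cmp St (Cmp St (\<epsilon> X) (SM (TM a))) (SM (\<eta> L))" by (rule gen[OF a])
  also have "\<dots> = Cmp St (Cmp St (\<epsilon> X) (SM (TM b))) (SM (\<eta> L))" using ab by simp
  also have "\<dots> = b" by (rule gen[OF b, symmetric])
  finally show ?thesis .
qed

lemma case2_key:
  assumes pS: "preadditive St" and fS: "functor Tt St SO SM" and fT: "functor St Tt TO TM"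
  and e1: "\<forall>X\<in>Obj St. \<eta> X \<in> hom St X (SO (TO X))"
  and e2: "\<forall>f\<in>Arr St. Cmp St (\<eta> (Cod St f)) f = Cmp St (SM (TM f)) (\<eta> (Dom St f))"
  and e3: "\<forall>Y\<in>Obj Tt. \<epsilon> Y \<in> hom Tt (TO (SO Y)) Y"
  and e6: "\<forall>Y\<in>Obj Tt. Cmp St (SM (\<epsilon> Y)) (\<eta> (SO Y)) = Idn St (SO Y)"
  and L: "L \<in> Obj Tt" and a: "a \<in> hom St X (SO L)" and b: "b \<in> hom St X (SO L)"
  and ab: "TM a = TM b"
  shows "a = b"
proof -
  have cS: "category St" using pcat[OF pS] .
  have SL: "SO L \<in> Obj St" using fun_obj[OF fS L] .
  have eta: "\<eta> (SO L) \<in> hom St (SO L) (SO (TO (SO L)))" using e1 SL by simp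
  have Se: "SM (\<epsilon> L) \<in> hom St (SO (TO (SO L))) (SO L)" using fun_hom[OF fS] e3 L by simp
  have id: "Cmp St (SM (\<epsilon> L)) (\<eta> (SO L)) = Idn St (SO L)" using e6 L by simp
  have gen: "c = Cmp St (SM (\<epsilon> L)) (Cmp St (SM (TM c)) (\<eta> X))" if c: "c \<in> hom St X (SO L)" for c
  proof -
    have "c = Cmp St (Cmp St (SM (\<epsilon> L)) (\<eta> (SO L))) c" using id idl[OF cS c] by simp
    also have "\<dots> = Cmp St (SM (\<epsilon> L)) (Cmp St (\<eta> (SO L)) c)" using assoc[OF cS c eta Se] by simp
    also have "Cmp St (\<eta> (SO L)) c = Cmp St (SM (TM c)) (\<eta> X)"
      using e2 homD[OF c] by auto
    finally show ?thesis .
  qed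
  have "a = Cmp St (SM (\<epsilon> L)) (Cmp St (SM (TM a)) (\<eta> X))" by (rule gen[OF a])
  also have "\<dots> = Cmp St (SM (\<epsilon> L)) (Cmp St (SM (TM b)) (\<eta> X))" using ab by simp
  also have "\<dots> = b" by (rule gen[OF b, symmetric])
  finally show ?thesis .
qed



lemma case1_add_proj:
  assumes pS: "preadditive St" and fS: "functor Tt St SO SM" and fT: "functor St Tt TO TM"
  and e1: "\<forall>X\<in>Obj Tt. \<eta> X \<in> hom Tt X (TO (SO X))"
  and e3: "\<forall>Y\<in>Obj St. \<epsilon> Y \<in> hom St (SO (TO Y)) Y"
  and e4: "\<forall>g\<in>Arr St. Cmp St g (\<epsilon> (Dom St g)) = Cmp St (\<epsilon> (Cod St g)) (SM (TM g))"
  and e5: "\<forall>X\<in>Obj Tt. Cmp St (\<epsilon> (SO X)) (SM (\<eta> X)) = Idn St (SO X)"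
  and add: "in_add_im St Tt SO Q"
  shows "rel_projective St TM Q"
proof -
  have cS: "category St" using pcat[OF pS] .
  obtain Ls P ins prs s r where Ls: "set Ls \<subseteq> Obj Tt" and bp: "is_biprod St (map SO Ls) P ins prs"
    and s: "s \<in> hom St Q P" and r: "r \<in> hom St P Q" and rs: "Cmp St r s = Idn St Q"
    using add unfolding in_add_im_def by blast
  have ins: "\<forall>i<length Ls. ins ! i \<in> hom St (SO (Ls ! i)) P"
    using bp unfolding is_biprod_def by simp
  show ?thesis unfolding rel_projective_def inj_on_def
  proof (intro ballI impI)
    fix X f g assume X: "X \<in> Obj St" and f: "f \<in> hom St Q X" and g: "g \<in> hom St Q X" and fg: "TM f = TM g"
    have fr: "Cmp St f r \<in> hom St P X" using comp_hom[OF cS r f] .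
    have gr: "Cmp St g r \<in> hom St P X" using comp_hom[OF cS r g] .
    have "\<forall>i<length (map SO Ls). Cmp St (Cmp St f r) (ins ! i) = Cmp St (Cmp St g r) (ins ! i)"
    proof (intro allI impI)
      fix i assume "i < length (map SO Ls)"
      then have i: "i < length Ls" by simp
      have L: "Ls ! i \<in> Obj Tt" using Ls i by auto
      have ii: "ins ! i \<in> hom St (SO (Ls ! i)) P" using ins i by simp
      show "Cmp St (Cmp St f r) (ins ! i) = Cmp St (Cmp St g r) (ins ! i)"
        apply (rule case1_key[OF pS fS fT e1 e3 e4 e5 L comp_hom[OF cS ii fr] comp_hom[OF cS ii gr]])
        using fun_comp[OF fT ii fr] fun_comp[OF fT ii gr] fun_comp[OF fT r f] fun_comp[OF fT r g] fg
        by simp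
    qed
    from biprod_ext_r[OF pS bp fr gr this] have e: "Cmp St f r = Cmp St g r" .
    have "f = Cmp St f (Cmp St r s)" using rs idr[OF cS f] by simp
    also have "\<dots> = Cmp St (Cmp St f r) s" by (rule assoc[OF cS s r f])
    also have "\<dots> = Cmp St (Cmp St g r) s" using e by simp
    also have "\<dots> = Cmp St g (Cmp St r s)" by (rule assoc[OF cS s r g, symmetric])
    also have "\<dots> = g" using rs idr[OF cS g] by simp
    finally show "f = g" .
  qed
qed

lemma case2_add_inj:
  assumes pS: "preadditive St" and fS: "functor Tt St SO SM" and fT: "functor St Tt TO TM"
  and e1: "\<forall>X\<in>Obj St. \<eta> X \<in> hom St X (SO (TO X))"
  and e2: "\<forall>f\<in>Arr St. Cmp St (\<eta> (Cod St f)) f = Cmp St (SM (TM f)) (\<eta> (Dom St f))"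
  and e3: "\<forall>Y\<in>Obj Tt. \<epsilon> Y \<in> hom Tt (TO (SO Y)) Y"
  and e6: "\<forall>Y\<in>Obj Tt. Cmp St (SM (\<epsilon> Y)) (\<eta> (SO Y)) = Idn St (SO Y)"
  and add: "in_add_im St Tt SO Q"
  shows "rel_injective St TM Q"
proof -
  have cS: "category St" using pcat[OF pS] .
  obtain Ls P ins prs s r where Ls: "set Ls \<subseteq> Obj Tt" and bp: "is_biprod St (map SO Ls) P ins prs"
    and s: "s \<in> hom St Q P" and r: "r \<in> hom St P Q" and rs: "Cmp St r s = Idn St Q"
    using add unfolding in_add_im_def by blast
  have prs: "\<forall>i<length Ls. prs ! i \<in> hom St P (SO (Ls ! i))"
    using bp unfolding is_biprod_def by simp
  show ?thesis unfolding rel_injective_def inj_on_def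
  proof (intro ballI impI)
    fix X f g assume X: "X \<in> Obj St" and f: "f \<in> hom St X Q" and g: "g \<in> hom St X Q" and fg: "TM f = TM g"
    have sf: "Cmp St s f \<in> hom St X P" using comp_hom[OF cS f s] .
    have sg: "Cmp St s g \<in> hom St X P" using comp_hom[OF cS g s] .
    have "\<forall>i<length (map SO Ls). Cmp St (prs ! i) (Cmp St s f) = Cmp St (prs ! i) (Cmp St s g)"
    proof (intro allI impI)
      fix i assume "i < length (map SO Ls)"
      then have i: "i < length Ls" by simp
      have L: "Ls ! i \<in> Obj Tt" using Ls i by auto
      have ii: "prs ! i \<in> hom St P (SO (Ls ! i))" using prs i by simp
      show "Cmp St (prs ! i) (Cmp St s f) = Cmp St (prs ! i) (Cmp St s g)"
        apply (rule case2_key[OF pS fS fT e1 e2 e3 e6 L comp_hom[OF cS sf ii] comp_hom[OF cS sg ii]])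
        using fun_comp[OF fT sf ii] fun_comp[OF fT sg ii] fun_comp[OF fT f s] fun_comp[OF fT g s] fg
        by simp
    qed
    from biprod_ext_l[OF pS bp sf sg this] have e: "Cmp St s f = Cmp St s g" .
    have "f = Cmp St (Cmp St r s) f" using rs idl[OF cS f] by simp
    also have "\<dots> = Cmp St r (Cmp St s f)" by (rule assoc[OF cS f s r, symmetric])
    also have "\<dots> = Cmp St r (Cmp St s g)" using e by simp
    also have "\<dots> = Cmp St (Cmp St r s) g" by (rule assoc[OF cS g s r])
    also have "\<dots> = g" using rs idl[OF cS g] by simp
    finally show "f = g" .
  qed
qed



lemma case1_proj_add:
  assumes tS: "triangulated St" and pT: "preadditive Tt"
  and afT: "additive_functor St Tt TO TM" and fS: "functor Tt St SO SM"
  and e1: "\<forall>X\<in>Obj Tt. \<eta> X \<in> hom Tt X (TO (SO X))"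
  and e3: "\<forall>Y\<in>Obj St. \<epsilon> Y \<in> hom St (SO (TO Y)) Y"
  and e6: "\<forall>Y\<in>Obj St. Cmp Tt (TM (\<epsilon> Y)) (\<eta> (TO Y)) = Idn Tt (TO Y)"
  and Q: "Q \<in> Obj St"
  and proj: "rel_projective St TM Q"
  shows "in_add_im St Tt SO Q"
proof -
  have pS: "preadditive St" using tr_pa[OF tS] .
  have cS: "category St" using pcat[OF pS] .
  have cT: "category Tt" using pcat[OF pT] .
  have fT: "functor St Tt TO TM" using af_fun[OF afT pS pT] .
  define M where "M = SO (TO Q)"
  have TQ: "TO Q \<in> Obj Tt" using fun_obj[OF fT Q] .
  have M: "M \<in> Obj St" unfolding M_def using fun_obj[OF fS TQ] .
  have eQ: "\<epsilon> Q \<in> hom St M Q" using e3 Q M_def by simp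
  obtain v w where d: "(\<epsilon> Q, v, w) \<in> Dist St" using tr1_ex[OF tS] homD[OF eQ] by blast
  define Cc where "Cc = Cod St v"
  have v: "v \<in> hom St Q Cc" using dist_tri[OF tS d] homD[OF eQ] Cc_def by simp
  have Cc: "Cc \<in> Obj St" using hXY[OF pS v] by simp
  have vz: "Cmp St v (\<epsilon> Q) = Zro St M Cc" using dist_zero[OF tS d] homD[OF eQ] Cc_def by simp
  have Tv: "TM v \<in> hom Tt (TO Q) (TO Cc)" using fun_hom[OF fT v] .
  have Te: "TM (\<epsilon> Q) \<in> hom Tt (TO M) (TO Q)" using fun_hom[OF fT eQ] .
  have et: "\<eta> (TO Q) \<in> hom Tt (TO Q) (TO M)" using e1 TQ M_def by simp
  have "TM v = Cmp Tt (TM v) (Cmp Tt (TM (\<epsilon> Q)) (\<eta> (TO Q)))" using e6 Q idr[OF cT Tv] by simp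
  also have "\<dots> = Cmp Tt (Cmp Tt (TM v) (TM (\<epsilon> Q))) (\<eta> (TO Q))" using assoc[OF cT et Te Tv] .
  also have "\<dots> = Cmp Tt (Zro Tt (TO M) (TO Cc)) (\<eta> (TO Q))"
    using fun_comp[OF fT eQ v] vz af_zro[OF afT pS pT M Cc] by simp
  also have "\<dots> = Zro Tt (TO Q) (TO Cc)" using comp_zro_l[OF pT et fun_obj[OF fT Cc]] .
  also have "\<dots> = TM (Zro St Q Cc)" using af_zro[OF afT pS pT Q Cc] by simp
  finally have "TM v = TM (Zro St Q Cc)" .
  then have v0: "v = Zro St Q Cc"
    using proj Cc v zro_hom[OF pS Q Cc] unfolding rel_projective_def inj_on_def by blast
  have iQ: "Idn St Q \<in> hom St Q (Cod St (\<epsilon> Q))" using id_hom[OF cS Q] homD[OF eQ] by simp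
  have "Cmp St v (Idn St Q) = Zro St Q Cc" using idr[OF cS v] v0 by simp
  then have "Cmp St v (Idn St Q) = Zro St Q (Cod St v)" using Cc_def by simp
  from dist_exact[OF tS d iQ this] obtain s where s: "s \<in> hom St Q M" and es: "Cmp St (\<epsilon> Q) s = Idn St Q"
    using homD[OF eQ] by auto
  show ?thesis unfolding in_add_im_def
    apply (rule exI[of _ "[TO Q]"], rule exI[of _ M], rule exI[of _ "[Idn St M]"], rule exI[of _ "[Idn St M]"])
    apply (rule exI[of _ s], rule exI[of _ "\<epsilon> Q"])
    using TQ single_biprod[OF pS M] s eQ es M_def by simp
qed



lemma case2_inj_add:
  assumes tS: "triangulated St" and pT: "preadditive Tt"
  and afT: "additive_functor St Tt TO TM" and fS: "functor Tt St SO SM"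
  and e1: "\<forall>X\<in>Obj St. \<eta> X \<in> hom St X (SO (TO X))"
  and e3: "\<forall>Y\<in>Obj Tt. \<epsilon> Y \<in> hom Tt (TO (SO Y)) Y"
  and e5: "\<forall>X\<in>Obj St. Cmp Tt (\<epsilon> (TO X)) (TM (\<eta> X)) = Idn Tt (TO X)"
  and Q: "Q \<in> Obj St"
  and inj: "rel_injective St TM Q"
  shows "in_add_im St Tt SO Q"
proof -
  have pS: "preadditive St" using tr_pa[OF tS] .
  have cS: "category St" using pcat[OF pS] .
  have cT: "category Tt" using pcat[OF pT] .
  have fT: "functor St Tt TO TM" using af_fun[OF afT pS pT] .
  have shf: "functor St St (ShO St) (ShA St)" using sh_fun[OF tS] .
  have afsh: "additive_functor St St (ShO St) (ShA St)" using tr_sh[OF tS] .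
  define M where "M = SO (TO Q)"
  have TQ: "TO Q \<in> Obj Tt" using fun_obj[OF fT Q] .
  have M: "M \<in> Obj St" unfolding M_def using fun_obj[OF fS TQ] .
  have eta: "\<eta> Q \<in> hom St Q M" using e1 Q M_def by simp
  note etaD = homD[OF eta]
  obtain v w where d: "(\<eta> Q, v, w) \<in> Dist St" using tr1_ex[OF tS] etaD by blast
  define Cc where "Cc = Cod St v"
  have v: "v \<in> hom St M Cc" and w: "w \<in> hom St Cc (ShO St Q)"
    using dist_tri[OF tS d] etaD Cc_def by auto
  have Cc: "Cc \<in> Obj St" using hXY[OF pS v] by simp
  obtain C' \<phi> where C': "C' \<in> Obj St" and phi: "\<phi> \<in> hom St (ShO St C') Cc" and iphi: "iso St \<phi>"
    using ess_surj[OF tS Cc] by blast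
  obtain \<psi> where psi: "\<psi> \<in> hom St Cc (ShO St C')" and pp: "Cmp St \<psi> \<phi> = Idn St (ShO St C')"
    and pp2: "Cmp St \<phi> \<psi> = Idn St Cc" using iso_inv[OF cS iphi phi] by blast
  have sC': "ShO St C' \<in> Obj St" using fun_obj[OF shf C'] .
  have sQ: "ShO St Q \<in> Obj St" using fun_obj[OF shf Q] .
  have wp: "Cmp St w \<phi> \<in> hom St (ShO St C') (ShO St Q)" using comp_hom[OF cS phi w] .
  obtain a where a: "a \<in> hom St C' Q" and wpa: "Cmp St w \<phi> = ShA St a"
    using sh_surj[OF tS C' Q wp] by blast
  define u' where "u' = Ngt St a"
  have u': "u' \<in> hom St C' Q" using ngt_hom[OF pS a] u'_def by simp
  define v2 where "v2 = Cmp St \<psi> v"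
  have v2: "v2 \<in> hom St M (ShO St C')" using comp_hom[OF cS v psi] v2_def by simp
  have iQ: "Idn St Q \<in> hom St Q Q" using id_hom[OF cS Q] .
  have iM: "Idn St M \<in> hom St M M" using id_hom[OF cS M] .
  have D1: "(\<eta> Q, v2, Cmp St w \<phi>) \<in> Dist St"
  proof (rule tr1_iso[OF tS _ d])
    show "is_triangle St (\<eta> Q, v2, Cmp St w \<phi>)"
      unfolding is_triangle_def using etaD homD[OF v2] v2 wp sC' by simp
    show "Idn St Q \<in> hom St (Dom St (\<eta> Q)) (Dom St (\<eta> Q))" using iQ etaD by simp
    show "Idn St M \<in> hom St (Cod St (\<eta> Q)) (Cod St (\<eta> Q))" using iM etaD by simp
    show "\<phi> \<in> hom St (Cod St v2) (Cod St v)" using phi homD[OF v2] Cc_def by simp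
    show "iso St (Idn St Q)" using iso_id[OF cS Q] .
    show "iso St (Idn St M)" using iso_id[OF cS M] .
    show "iso St \<phi>" using iphi .
    show "Cmp St (Idn St M) (\<eta> Q) = Cmp St (\<eta> Q) (Idn St Q)" using idl[OF cS eta] idr[OF cS eta] by simp
    show "Cmp St \<phi> v2 = Cmp St v (Idn St M)"
      using v2_def assoc[OF cS v psi phi] pp2 idl[OF cS v] idr[OF cS v] by simp
    show "Cmp St (ShA St (Idn St Q)) (Cmp St w \<phi>) = Cmp St w \<phi>"
      using fun_id[OF shf Q] idl[OF cS wp] by simp
  qed
  have sa: "ShA St a \<in> hom St (ShO St C') (ShO St Q)" using fun_hom[OF shf a] .
  have nsu: "Ngt St (ShA St u') = ShA St a"
    using u'_def af_ngt[OF afsh pS pS a] ngt_ngt[OF pS sa] by simp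
  have D2: "(u', \<eta> Q, v2) \<in> Dist St"
  proof -
    have "is_triangle St (u', \<eta> Q, v2)"
      unfolding is_triangle_def using homD[OF u'] eta M v2 etaD by simp
    then have "(u', \<eta> Q, v2) \<in> Dist St \<longleftrightarrow> (\<eta> Q, v2, Ngt St (ShA St u')) \<in> Dist St"
      by (rule rot_iff[OF tS])
    then show ?thesis using D1 nsu wpa by simp
  qed
  have ez: "Cmp St (\<eta> Q) u' = Zro St C' M" using dist_zero[OF tS D2] homD[OF u'] etaD by simp
  have eTQ: "\<epsilon> (TO Q) \<in> hom Tt (TO M) (TO Q)" using e3 TQ M_def by simp
  have Teta: "TM (\<eta> Q) \<in> hom Tt (TO Q) (TO M)" using fun_hom[OF fT eta] .
  have Tu: "TM u' \<in> hom Tt (TO C') (TO Q)" using fun_hom[OF fT u'] .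
  have split: "Cmp Tt (\<epsilon> (TO Q)) (TM (\<eta> Q)) = Idn Tt (TO Q)" using e5 Q by simp
  have "TM u' = Cmp Tt (Cmp Tt (\<epsilon> (TO Q)) (TM (\<eta> Q))) (TM u')" using split idl[OF cT Tu] by simp
  also have "\<dots> = Cmp Tt (\<epsilon> (TO Q)) (Cmp Tt (TM (\<eta> Q)) (TM u'))" using assoc[OF cT Tu Teta eTQ] by simp
  also have "\<dots> = Cmp Tt (\<epsilon> (TO Q)) (Zro Tt (TO C') (TO M))"
    using fun_comp[OF fT u' eta] ez af_zro[OF afT pS pT C' M] by simp
  also have "\<dots> = Zro Tt (TO C') (TO Q)" using comp_zro_r[OF pT eTQ fun_obj[OF fT C']] .
  also have "\<dots> = TM (Zro St C' Q)" using af_zro[OF afT pS pT C' Q] by simp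
  finally have "TM u' = TM (Zro St C' Q)" .
  then have u0: "u' = Zro St C' Q"
    using inj C' u' zro_hom[OF pS C' Q] unfolding rel_injective_def inj_on_def by blast
  have wz: "Cmp St w \<phi> = Zro St (ShO St C') (ShO St Q)"
    using nsu[symmetric] wpa u0 af_zro[OF afsh pS pS C' Q] ngt_zro[OF pS sC' sQ] by simp
  have D3: "(v2, Cmp St w \<phi>, Ngt St (ShA St (\<eta> Q))) \<in> Dist St" using rot[OF tS D1] .
  have isC: "Idn St (ShO St C') \<in> hom St (ShO St C') (Cod St v2)" using id_hom[OF cS sC'] homD[OF v2] by simp
  have "Cmp St (Cmp St w \<phi>) (Idn St (ShO St C')) = Zro St (ShO St C') (Cod St (Cmp St w \<phi>))"
    using idr[OF cS wp] wz homD[OF wp] by simp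
  from dist_exact[OF tS D3 isC this] obtain s where s: "s \<in> hom St (ShO St C') M"
    and vs: "Cmp St v2 s = Idn St (ShO St C')" using homD[OF v2] by auto
  define sv where "sv = Cmp St s v2"
  have sv: "sv \<in> hom St M M" using comp_hom[OF cS v2 s] sv_def by simp
  have nsv: "Ngt St sv \<in> hom St M M" using ngt_hom[OF pS sv] .
  define e where "e = Pls St (Idn St M) (Ngt St sv)"
  have e: "e \<in> hom St M M" using pls_hom[OF pS iM nsv] e_def by simp
  have v2sv: "Cmp St v2 sv = v2" using sv_def assoc[OF cS v2 s v2] vs idl[OF cS v2] by simp
  have "Cmp St v2 e = Pls St (Cmp St v2 (Idn St M)) (Cmp St v2 (Ngt St sv))"
    using e_def distr_r[OF pS iM nsv v2] by simp
  also have "\<dots> = Pls St v2 (Ngt St v2)" using idr[OF cS v2] comp_ngt_r[OF pS sv v2] v2sv by simp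
  also have "\<dots> = Zro St M (ShO St C')" using pls_ngt[OF pS v2] .
  finally have v2e: "Cmp St v2 e = Zro St M (Cod St v2)" using homD[OF v2] by simp
  have e': "e \<in> hom St M (Cod St (\<eta> Q))" using e etaD by simp
  from dist_exact[OF tS D1 e' v2e] obtain r where r: "r \<in> hom St M Q" and er: "Cmp St (\<eta> Q) r = e"
    using etaD by auto
  have v2eta: "Cmp St v2 (\<eta> Q) = Zro St Q (ShO St C')" using dist_zero[OF tS D1] etaD homD[OF v2] by simp
  have sveta: "Cmp St sv (\<eta> Q) = Zro St Q M"
    using sv_def assoc[OF cS eta v2 s] v2eta comp_zro_r[OF pS s Q] by simp
  have "Cmp St e (\<eta> Q) = Pls St (Cmp St (Idn St M) (\<eta> Q)) (Cmp St (Ngt St sv) (\<eta> Q))"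
    using e_def distr_l[OF pS eta iM nsv] by simp
  also have "\<dots> = \<eta> Q"
    using idl[OF cS eta] comp_ngt_l[OF pS eta sv] sveta ngt_zro[OF pS Q M] pls_zro[OF pS eta] by simp
  finally have eeta: "Cmp St e (\<eta> Q) = \<eta> Q" .
  have re: "Cmp St r (\<eta> Q) \<in> hom St Q Q" using comp_hom[OF cS eta r] .
  have ere: "Cmp St (\<eta> Q) (Cmp St r (\<eta> Q)) = \<eta> Q" using assoc[OF cS eta r eta] er eeta by simp
  have Tre: "TM (Cmp St r (\<eta> Q)) \<in> hom Tt (TO Q) (TO Q)" using fun_hom[OF fT re] .
  have "TM (Cmp St r (\<eta> Q)) = Cmp Tt (Cmp Tt (\<epsilon> (TO Q)) (TM (\<eta> Q))) (TM (Cmp St r (\<eta> Q)))"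
    using split idl[OF cT Tre] by simp
  also have "\<dots> = Cmp Tt (\<epsilon> (TO Q)) (Cmp Tt (TM (\<eta> Q)) (TM (Cmp St r (\<eta> Q))))"
    using assoc[OF cT Tre Teta eTQ] by simp
  also have "\<dots> = Idn Tt (TO Q)" using fun_comp[OF fT re eta] ere split by simp
  also have "\<dots> = TM (Idn St Q)" using fun_id[OF fT Q] by simp
  finally have "TM (Cmp St r (\<eta> Q)) = TM (Idn St Q)" .
  then have rid: "Cmp St r (\<eta> Q) = Idn St Q"
    using inj Q re iQ unfolding rel_injective_def inj_on_def by blast
  show ?thesis unfolding in_add_im_def
    apply (rule exI[of _ "[TO Q]"], rule exI[of _ M], rule exI[of _ "[Idn St M]"], rule exI[of _ "[Idn St M]"])
    apply (rule exI[of _ "\<eta> Q"], rule exI[of _ r])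
    using TQ single_biprod[OF pS M] eta r rid M_def by simp
qed



theorem proposition2p8:
  fixes \<S> :: "('a, 'b) tricat" and \<T> :: "('c, 'd) tricat"
    and TO :: "'a \<Rightarrow> 'c" and TM :: "'b \<Rightarrow> 'd"
    and SO :: "'c \<Rightarrow> 'a" and SM :: "'d \<Rightarrow> 'b"
    and Q :: 'a
  assumes "triangulated \<S>" and "triangulated \<T>"
    and "triangle_functor \<S> \<T> TO TM"
    and "Q \<in> Obj \<S>"
  shows "(adjunction \<T> \<S> SO SM TO TM \<longrightarrow> (rel_projective \<S> TM Q \<longleftrightarrow> in_add_im \<S> \<T> SO Q)) \<and>
         (adjunction \<S> \<T> TO TM SO SM \<longrightarrow> (rel_injective \<S> TM Q \<longleftrightarrow> in_add_im \<S> \<T> SO Q))"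
proof -
  note tS = assms(1)
  have pS: "preadditive \<S>" using tr_pa[OF assms(1)] .
  have pT: "preadditive \<T>" using tr_pa[OF assms(2)] .
  have afT: "additive_functor \<S> \<T> TO TM" using assms(3) unfolding triangle_functor_def by simp
  have fT: "functor \<S> \<T> TO TM" using af_fun[OF afT pS pT] .
  have Q: "Q \<in> Obj \<S>" using assms(4) .
  show ?thesis
  proof (intro conjI impI)
    assume adj: "adjunction \<T> \<S> SO SM TO TM"
    have fS: "functor \<T> \<S> SO SM" using adj unfolding adjunction_def by simp
    obtain \<eta> \<epsilon> where
      e1: "\<forall>X\<in>Obj \<T>. \<eta> X \<in> hom \<T> X (TO (SO X))" and
      e2: "\<forall>f\<in>Arr \<T>. Cmp \<T> (\<eta> (Cod \<T> f)) f = Cmp \<T> (TM (SM f)) (\<eta> (Dom \<T> f))" and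
      e3: "\<forall>Y\<in>Obj \<S>. \<epsilon> Y \<in> hom \<S> (SO (TO Y)) Y" and
      e4: "\<forall>g\<in>Arr \<S>. Cmp \<S> g (\<epsilon> (Dom \<S> g)) = Cmp \<S> (\<epsilon> (Cod \<S> g)) (SM (TM g))" and
      e5: "\<forall>X\<in>Obj \<T>. Cmp \<S> (\<epsilon> (SO X)) (SM (\<eta> X)) = Idn \<S> (SO X)" and
      e6: "\<forall>Y\<in>Obj \<S>. Cmp \<T> (TM (\<epsilon> Y)) (\<eta> (TO Y)) = Idn \<T> (TO Y)"
      using adj[unfolded adjunction_def, THEN conjunct2, THEN conjunct2] by blast
    show "rel_projective \<S> TM Q \<longleftrightarrow> in_add_im \<S> \<T> SO Q"
      using case1_proj_add[OF tS pT afT fS e1 e3 e6 Q] case1_add_proj[OF pS fS fT e1 e3 e4 e5] by blast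
  next
    assume adj: "adjunction \<S> \<T> TO TM SO SM"
    have fS: "functor \<T> \<S> SO SM" using adj unfolding adjunction_def by simp
    obtain \<eta> \<epsilon> where
      e1: "\<forall>X\<in>Obj \<S>. \<eta> X \<in> hom \<S> X (SO (TO X))" and
      e2: "\<forall>f\<in>Arr \<S>. Cmp \<S> (\<eta> (Cod \<S> f)) f = Cmp \<S> (SM (TM f)) (\<eta> (Dom \<S> f))" and
      e3: "\<forall>Y\<in>Obj \<T>. \<epsilon> Y \<in> hom \<T> (TO (SO Y)) Y" and
      e4: "\<forall>g\<in>Arr \<T>. Cmp \<T> g (\<epsilon> (Dom \<T> g)) = Cmp \<T> (\<epsilon> (Cod \<T> g)) (TM (SM g))" and
      e5: "\<forall>X\<in>Obj \<S>. Cmp \<T> (\<epsilon> (TO X)) (TM (\<eta> X)) = Idn \<T> (TO X)" and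
      e6: "\<forall>Y\<in>Obj \<T>. Cmp \<S> (SM (\<epsilon> Y)) (\<eta> (SO Y)) = Idn \<S> (SO Y)"
      using adj[unfolded adjunction_def, THEN conjunct2, THEN conjunct2] by blast
    show "rel_injective \<S> TM Q \<longleftrightarrow> in_add_im \<S> \<T> SO Q"
      using case2_inj_add[OF tS pT afT fS e1 e3 e5 Q] case2_add_inj[OF pS fS fT e1 e2 e3 e6] by blast
  qed
qed

end
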